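(* For every integer $m\ge1$ the following identities hold: $$\sum_{k=0}^{m}\frac{\binom{m}{k}\binom{m}{k}}{\binom{2m}{2k}}=\frac{(2m)!!}{(2m-1)!!}=4^m\frac{(m!)^2}{(2m)!},$$ $$\sum_{k=0}^{m}\frac{\binom{m}{k}\binom{m}{k+1}}{\binom{2m}{2k}}=2m+1-\frac{(2m)!!}{(2m-1)!!},$$ $$\sum_{k=0}^{m}\frac{\binom{m}{k}\binom{m+1}{k+1}}{\binom{2m}{2k}}=2m+1.$$
   Context: Convention: $\binom{m}{m+1}=0$, $\binom{m}{0}=1$. $(2m)!!=2\cdot4\cdots(2m)$, $(2m-1)!!=1\cdot3\cdots(2m-1)$. *)

theory Defs
  imports Complex_Main
begin

text \<open>(2m)!! = 2*4*...*(2m) and (2m-1)!! = 1*3*...*(2m-1), as in the paper's convention.\<close>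
definition even_dfact :: "nat \<Rightarrow> nat" where
  "even_dfact m = (\<Prod>i=1..m. 2 * i)"

definition odd_dfact :: "nat \<Rightarrow> nat" where
  "odd_dfact m = (\<Prod>i=1..m. 2 * i - 1)"

end

theory Submission imports Defs "HOL-Computational_Algebra.Formal_Power_Series" begin

lemma fact_double_aux:
  "(fact (2*k) :: real) = (-4)^k * (\<Prod>i=0..<k. -1/2 - real i) * fact k"
proof (induction k)
  case 0 then show ?case by simp
next
  case (Suc k)
  have "(fact (2*Suc k) :: real) = (2*real k+2)*(2*real k+1) * fact (2*k)"
    by (simp add: fact_Suc algebra_simps)
  also have "\<dots> = (2*real k+2)*(2*real k+1) * ((-4)^k * (\<Prod>i=0..<k. -1/2 - real i) * fact k)"
    by (subst Suc.IH) (rule refl)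
  also have "\<dots> = (-4)^Suc k * (\<Prod>i=0..<Suc k. -1/2 - real i) * fact (Suc k)"
    apply (simp add: prod.atLeast0_lessThan_Suc fact_Suc) by algebra
  finally show ?case .
qed

lemma cb: "real ((2*k) choose k) = (-4)^k * ((-1/2::real) gchoose k)"
proof -
  have "real ((2*k) choose k) = fact (2*k) / (fact k * fact k)"
    using binomial_fact[of k "2*k"] by simp
  also have "\<dots> = (-4)^k * (fact k * ((-1/2::real) gchoose k)) / fact k"
    unfolding fact_double_aux gbinomial_mult_fact by (simp add: atLeast0LessThan)
  also have "\<dots> = (-4)^k * ((-1/2::real) gchoose k)" by simp
  finally show ?thesis .
qed

lemma gminus1: "((-1::real) gchoose m) = (-1)^m"
  using gbinomial_minus[of "1::real" m] by (simp add: binomial_gbinomial[symmetric])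

lemma conv0: "(\<Sum>k=0..m. real ((2*k) choose k) * real ((2*(m-k)) choose (m-k))) = 4^m"
proof -
  have "(\<Sum>k=0..m. real ((2*k) choose k) * real ((2*(m-k)) choose (m-k)))
      = (\<Sum>k=0..m. (-4)^m * (((-1/2::real) gchoose k) * ((-1/2::real) gchoose (m-k))))"
  proof (rule sum.cong)
    fix k assume "k \<in> {0..m}"
    then have e: "(-4::real)^k * (-4)^(m-k) = (-4)^m" by (simp flip: power_add)
    show "real ((2*k) choose k) * real ((2*(m-k)) choose (m-k)) = (-4)^m * (((-1/2::real) gchoose k) * ((-1/2::real) gchoose (m-k)))"
      unfolding cb e[symmetric] by (simp only: mult_ac)
  qed simp
  also have "\<dots> = (-4)^m * ((-1::real) gchoose m)"
    by (simp add: sum_distrib_left[symmetric] gbinomial_Vandermonde)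
  also have "\<dots> = 4^m" by (simp add: gminus1 flip: power_mult_distrib)
  finally show ?thesis .
qed

lemma conv1: "(\<Sum>k=0..m. real ((2*k) choose k) / real (k+1) * real ((2*(m-k)) choose (m-k)))
   = real ((2*(m+1)) choose (m+1)) / 2"
proof -
  have h: "((-1/2::real) gchoose k) / real (k+1) = 2 * ((1/2::real) gchoose Suc k)" for k
    using Suc_times_gbinomial[of k "-1/2::real"] by (simp add: field_simps)
  have "(\<Sum>k=0..m. real ((2*k) choose k) / real (k+1) * real ((2*(m-k)) choose (m-k)))
      = (\<Sum>k=0..m. 2 * (-4)^m * (((1/2::real) gchoose Suc k) * ((-1/2::real) gchoose (m-k))))"
  proof (rule sum.cong)
    fix k assume "k \<in> {0..m}"
    then have e: "(-4::real)^k * (-4)^(m-k) = (-4)^m" by (simp flip: power_add)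
    have "real ((2*k) choose k) / real (k+1) * real ((2*(m-k)) choose (m-k))
       = (-4)^k * (-4)^(m-k) * ((((-1/2::real) gchoose k) / real (k+1)) * ((-1/2::real) gchoose (m-k)))"
      unfolding cb by simp
    also have "\<dots> = 2 * (-4)^m * (((1/2::real) gchoose Suc k) * ((-1/2::real) gchoose (m-k)))"
      unfolding e h by simp
    finally show "real ((2*k) choose k) / real (k+1) * real ((2*(m-k)) choose (m-k)) = 2 * (-4)^m * (((1/2::real) gchoose Suc k) * ((-1/2::real) gchoose (m-k)))" .
  qed simp
  also have "\<dots> = 2 * (-4)^m * (\<Sum>k=0..m. ((1/2::real) gchoose Suc k) * ((-1/2::real) gchoose (m-k)))"
    by (simp add: sum_distrib_left)
  also have "(\<Sum>k=0..m. ((1/2::real) gchoose Suc k) * ((-1/2::real) gchoose (m-k))) = - ((-1/2::real) gchoose Suc m)"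
  proof -
    have "(\<Sum>k=0..Suc m. ((1/2::real) gchoose k) * ((-1/2::real) gchoose (Suc m-k))) = 0"
      using gbinomial_Vandermonde[of "1/2::real" "-1/2" "Suc m"] by (simp add: gbinomial_0_left)
    then show ?thesis
      by (subst (asm) sum.atLeast0_atMost_Suc_shift) simp
  qed
  also have "2 * (-4)^m * - ((-1/2::real) gchoose Suc m) = real ((2*(m+1)) choose (m+1)) / 2"
    unfolding cb by simp
  finally show ?thesis .
qed


lemma even_dfact_eq: "even_dfact m = 2^m * fact m"
  by (induction m) (simp_all add: even_dfact_def prod.cl_ivl_Suc fact_Suc algebra_simps)

lemma dfact_prod: "odd_dfact m * even_dfact m = fact (2*m)"
proof (induction m)
  case 0 then show ?case by (simp add: odd_dfact_def even_dfact_def)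
next
  case (Suc m)
  have "odd_dfact (Suc m) * even_dfact (Suc m) = (odd_dfact m * even_dfact m) * ((2*m+1)*(2*m+2))"
    by (simp add: odd_dfact_def even_dfact_def prod.cl_ivl_Suc algebra_simps)
  also have "\<dots> = fact (2 * Suc m)" using Suc by (simp add: fact_Suc algebra_simps)
  finally show ?case .
qed

lemma term0:
  assumes "k \<le> m"
  shows "real ((m choose k) * (m choose k)) / real ((2*m) choose (2*k))
     = (fact m)^2 / fact (2*m) * (real ((2*k) choose k) * real ((2*(m-k)) choose (m-k)))"
proof -
  have e: "2*m - 2*k = 2*(m-k)" by simp
  have a: "real (m choose k) = fact m/(fact k*fact(m-k))" using assms by (rule binomial_fact)
  have b: "real ((2*m) choose (2*k)) = fact (2*m)/(fact (2*k)*fact(2*(m-k)))"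
    using binomial_fact[of "2*k" "2*m"] assms unfolding e by simp
  have c: "real ((2*k) choose k) = fact (2*k)/(fact k*fact k)"
    using binomial_fact[of k "2*k"] by simp
  have d: "real ((2*(m-k)) choose (m-k)) = fact (2*(m-k))/(fact (m-k)*fact (m-k))"
    using binomial_fact[of "m-k" "2*(m-k)"] by simp
  show ?thesis
    unfolding of_nat_mult a b c d by (simp add: power2_eq_square)
qed

lemma term3:
  "real ((m choose k) * ((m+1) choose (k+1))) = real ((m choose k) * (m choose k)) * real (m+1) / real (k+1)"
proof -
  have h: "real (Suc k) * real (Suc m choose Suc k) = real (Suc m) * real (m choose k)"
    using binomial_absorption[of k "Suc m"] by (metis diff_Suc_1 of_nat_mult)
  have C: "real (Suc m choose Suc k) = real (Suc m) * real (m choose k) / real (Suc k)"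
    using h by (simp add: eq_divide_eq mult.commute)
  show ?thesis unfolding of_nat_mult Suc_eq_plus1[symmetric] C by (simp add: mult_ac)
qed

lemma aux3: fixes F G y :: real assumes "F \<noteq> 0" "G \<noteq> 0" "y \<noteq> 0"
  shows "F^2 / G * y * ((2*y)*(2*y-1)*G / (y*F*(y*F)) / 2) = 2*y-1"
  using assms by (simp add: field_simps power2_eq_square)

theorem proposition5p1:
  fixes m :: nat
  assumes "m \<ge> 1"
  shows "(\<Sum>k=0..m. real ((m choose k) * (m choose k)) / real ((2*m) choose (2*k)))
           = real (even_dfact m) / real (odd_dfact m) \<and>
         real (even_dfact m) / real (odd_dfact m) = 4 ^ m * (fact m)^2 / fact (2*m) \<and>
         (\<Sum>k=0..m. real ((m choose k) * (m choose (k+1))) / real ((2*m) choose (2*k)))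
           = real (2*m+1) - real (even_dfact m) / real (odd_dfact m) \<and>
         (\<Sum>k=0..m. real ((m choose k) * ((m+1) choose (k+1))) / real ((2*m) choose (2*k)))
           = real (2*m+1)"
proof -
  define K :: real where "K = (fact m)^2 / fact (2*m)"
  have D: "real (even_dfact m) / real (odd_dfact m) = 4 ^ m * (fact m)^2 / fact (2*m)"
  proof -
    have o: "real (odd_dfact m) = fact (2*m) / (2^m * fact m)"
      using arg_cong[OF dfact_prod[of m], of real] unfolding even_dfact_eq
      by (simp add: field_simps)
    have f: "(4::real)^m = 2^m * 2^m" by (simp flip: power_mult_distrib)
    have "real (even_dfact m) / real (odd_dfact m) = (2^m * fact m) / (fact (2*m) / (2^m * fact m))"
      unfolding o even_dfact_eq by simp
    also have "\<dots> = 4 ^ m * (fact m)^2 / fact (2*m)"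
      unfolding f by (simp add: power2_eq_square)
    finally show ?thesis .
  qed
  have S0: "(\<Sum>k=0..m. real ((m choose k) * (m choose k)) / real ((2*m) choose (2*k))) = K * 4^m"
  proof -
    have "(\<Sum>k=0..m. real ((m choose k) * (m choose k)) / real ((2*m) choose (2*k)))
        = (\<Sum>k=0..m. K * (real ((2*k) choose k) * real ((2*(m-k)) choose (m-k))))"
    proof (rule sum.cong)
      fix k assume "k \<in> {0..m}"
      then have "k \<le> m" by simp
      then show "real ((m choose k) * (m choose k)) / real ((2*m) choose (2*k))
        = K * (real ((2*k) choose k) * real ((2*(m-k)) choose (m-k)))"
        unfolding K_def by (rule term0)
    qed simp
    also have "\<dots> = K * 4^m" by (simp add: sum_distrib_left[symmetric] conv0)
    finally show ?thesis .
  qed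
  have S3: "(\<Sum>k=0..m. real ((m choose k) * ((m+1) choose (k+1))) / real ((2*m) choose (2*k))) = real (2*m+1)"
  proof -
    have "(\<Sum>k=0..m. real ((m choose k) * ((m+1) choose (k+1))) / real ((2*m) choose (2*k)))
        = (\<Sum>k=0..m. K * real (m+1) * (real ((2*k) choose k) / real (k+1) * real ((2*(m-k)) choose (m-k))))"
    proof (rule sum.cong)
      fix k assume "k \<in> {0..m}"
      then have "k \<le> m" by simp
      then show "real ((m choose k) * ((m+1) choose (k+1))) / real ((2*m) choose (2*k))
        = K * real (m+1) * (real ((2*k) choose k) / real (k+1) * real ((2*(m-k)) choose (m-k)))"
      proof -
        have T0: "real ((m choose k) * (m choose k)) / real ((2*m) choose (2*k)) = K * (real ((2*k) choose k) * real ((2*(m-k)) choose (m-k)))"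
          unfolding K_def using \<open>k \<le> m\<close> by (rule term0)
        have "real ((m choose k) * ((m+1) choose (k+1))) / real ((2*m) choose (2*k))
           = real (m+1) / real (k+1) * (real ((m choose k) * (m choose k)) / real ((2*m) choose (2*k)))"
          unfolding term3 by (simp add: field_simps)
        also have "\<dots> = real (m+1) / real (k+1) * (K * (real ((2*k) choose k) * real ((2*(m-k)) choose (m-k))))"
          unfolding T0 ..
        also have "\<dots> = K * real (m+1) * (real ((2*k) choose k) / real (k+1) * real ((2*(m-k)) choose (m-k)))"
          by (simp add: field_simps)
        finally show ?thesis .
      qed
    qed simp
    also have "\<dots> = K * real (m+1) * (\<Sum>k=0..m. real ((2*k) choose k) / real (k+1) * real ((2*(m-k)) choose (m-k)))"
      by (rule sum_distrib_left[symmetric])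
    also have "\<dots> = K * real (m+1) * (real ((2*(m+1)) choose (m+1)) / 2)"
      unfolding conv1 ..
    also have "\<dots> = real (2*m+1)"
    proof -
      have e2: "2*(m+1)-(m+1) = m+1" by simp
      have c0: "real ((2*(m+1)) choose (m+1)) = fact (2*(m+1)) / (fact (m+1) * fact (2*(m+1)-(m+1)))"
        by (rule binomial_fact) simp
      have c: "real ((2*(m+1)) choose (m+1)) = fact (2*(m+1)) / (fact (m+1) * fact (m+1))"
        using c0 unfolding e2 .
      have f1: "(fact (2*(m+1)) :: real) = (2*real(m+1))*(2*real(m+1)-1) * fact (2*m)"
        by (simp add: fact_Suc algebra_simps)
      have f2: "(fact (m+1) :: real) = real (m+1) * fact m" by (simp add: fact_Suc)
      have r: "real (2*m+1) = 2*real(m+1) - 1" by simp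
      show ?thesis unfolding c f1 f2 K_def r
        by (rule aux3) simp_all
    qed
    finally show ?thesis .
  qed
  have S2: "(\<Sum>k=0..m. real ((m choose k) * (m choose (k+1))) / real ((2*m) choose (2*k)))
     = (\<Sum>k=0..m. real ((m choose k) * ((m+1) choose (k+1))) / real ((2*m) choose (2*k)))
       - (\<Sum>k=0..m. real ((m choose k) * (m choose k)) / real ((2*m) choose (2*k)))"
  proof -
    have "(\<Sum>k=0..m. real ((m choose k) * (m choose (k+1))) / real ((2*m) choose (2*k)))
       = (\<Sum>k=0..m. real ((m choose k) * ((m+1) choose (k+1))) / real ((2*m) choose (2*k))
            - real ((m choose k) * (m choose k)) / real ((2*m) choose (2*k)))"
    proof (rule sum.cong)
      fix k
      have p: "(m+1) choose (k+1) = (m choose k) + (m choose (k+1))" by simp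
      show "real ((m choose k) * (m choose (k+1))) / real ((2*m) choose (2*k))
       = real ((m choose k) * ((m+1) choose (k+1))) / real ((2*m) choose (2*k))
            - real ((m choose k) * (m choose k)) / real ((2*m) choose (2*k))"
        unfolding p diff_divide_distrib[symmetric] by (simp add: algebra_simps)
    qed simp
    then show ?thesis by (simp only: sum_subtractf)
  qed
  have S0': "(\<Sum>k=0..m. real ((m choose k) * (m choose k)) / real ((2*m) choose (2*k)))
           = real (even_dfact m) / real (odd_dfact m)"
    unfolding S0 D K_def by simp
  show ?thesis
    using S0' D S3 S2 by simp
qed

end
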